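(* For every $n\ge1$ and every $\mu$, \[ E_{\mu+n-1}\,E_{\mu+n-2,1}\cdots E_{\mu+1,n-2}\,E_{\mu,n-1}\;\circ\;F_{\mu,n-1}\,F_{\mu+1,n-2}\cdots F_{\mu+n-2,1}\,F_{\mu+n-1} =[\mu+n][\mu+n-1]\cdots[\mu+1]\;\mathrm{Id}_{M(\mu+n)} . \]
   Context: Let $\mathbb{K}=\mathbb{C}(q,q^{\mu})$, where $q$ and $q^{\mu}$ are algebraically independent indeterminates; $[a]=\frac{q^{a}-q^{-a}}{q-q^{-1}}$. $V_1$ is the 2-dimensional $U_q(\mathfrak{sl}_2)$-module with basis $v_0,v_1$. For $\lambda=\mu+k$ ($k\in\mathbb{Z}$), the Verma module $M(\lambda)$ has $\mathbb{K}$-basis $v_0,v_1,\dots$ with $Kv_i=q^{\lambda-2i}v_i$, $Ev_i=[i]v_{i-1}$, $Fv_i=[\lambda-i]v_{i+1}$, $v_{-1}=0$. For each such $\lambda$, the linear maps $E_\lambda: M(\lambda)\otimes V_1\to M(\lambda+1)$ and $F_\lambda: M(\lambda+1)\to M(\lambda)\otimes V_1$ are defined by $E_\lambda(v_i\otimes v_0)=q^iv_i$, $E_\lambda(v_i\otimes v_1)=v_{i+1}$, $F_\lambda(v_i)=[\lambda+1-i]\,v_i\otimes v_0+q^{i-\lambda-1}[i]\,v_{i-1}\otimes v_1$. For $j\ge0$ set $E_{\lambda,j}=E_\lambda\otimes\mathrm{Id}_{V_1}^{\otimes j}: M(\lambda)\otimes V_1^{\otimes (j+1)}\to M(\lambda+1)\otimes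 V_1^{\otimes j}$ and $F_{\lambda,j}=F_\lambda\otimes\mathrm{Id}_{V_1}^{\otimes j}: M(\lambda+1)\otimes V_1^{\otimes j}\to M(\lambda)\otimes V_1^{\otimes(j+1)}$, with $E_{\lambda,0}=E_\lambda$, $F_{\lambda,0}=F_\lambda$. Compositions are read right to left. *)

theory Defs
  imports "HOL-Computational_Algebra.Polynomial" "HOL-Computational_Algebra.Fraction_Field"
begin

text \<open>The field K = C(q, q^mu): fractions of bivariate complex polynomials,
  represented as polynomials in Q = q^mu whose coefficients are polynomials in q.\<close>
type_synonym K = "complex poly poly fract"

definition qq :: K where "qq = Fract [:[:0, 1:]:] 1"
definition qmu :: K where "qmu = Fract [:0, 1:] 1"

definition qint :: "int \<Rightarrow> K" where
  "qint a = (qq powi a - qq powi (- a)) / (qq - inverse qq)"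

definition qmuint :: "int \<Rightarrow> K" where
  "qmuint k = (qmu * qq powi k - inverse (qmu * qq powi k)) / (qq - inverse qq)"

text \<open>Basis of M(lambda) \<otimes> V_1^{\<otimes> j}: (i, w) stands for v_i \<otimes> v_{w_1} \<otimes> ... \<otimes> v_{w_j},
  where False = v_0 and True = v_1 (j = length w).\<close>
type_synonym basis = "nat \<times> bool list"
type_synonym vec = "basis \<Rightarrow> K"

definition delta :: "basis \<Rightarrow> vec" where
  "delta b = (\<lambda>c. if c = b then 1 else 0)"

definition lin :: "(basis \<Rightarrow> vec) \<Rightarrow> vec \<Rightarrow> vec" where
  "lin f v = (\<lambda>c. \<Sum>b\<in>{b. v b \<noteq> 0}. v b * f b c)"

text \<open>E_{lambda,j} on basis vectors (it does not depend on lambda):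
  v_i \<otimes> v_0 \<otimes> rest \<mapsto> q^i v_i \<otimes> rest,  v_i \<otimes> v_1 \<otimes> rest \<mapsto> v_{i+1} \<otimes> rest.\<close>
fun Ebas :: "basis \<Rightarrow> vec" where
  "Ebas (i, []) = (\<lambda>_. 0)"
| "Ebas (i, a # rest) = (if a then delta (i + 1, rest) else (\<lambda>c. qq ^ i * delta (i, rest) c))"

text \<open>F_{lambda,j} for lambda = mu + k on basis vectors:
  v_i \<otimes> rest \<mapsto> [lambda+1-i] v_i \<otimes> v_0 \<otimes> rest + q^(i-lambda-1) [i] v_{i-1} \<otimes> v_1 \<otimes> rest.\<close>
definition Fbas :: "int \<Rightarrow> basis \<Rightarrow> vec" where
  "Fbas k b = (case b of (i, rest) \<Rightarrow>
     (\<lambda>c. qmuint (k + 1 - int i) * delta (i, False # rest) c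
        + (if i = 0 then 0
           else qq powi (int i - k - 1) * inverse qmu * qint (int i) * delta (i - 1, True # rest) c)))"

definition Emap :: "int \<Rightarrow> vec \<Rightarrow> vec" where "Emap k = lin Ebas"
definition Fmap :: "int \<Rightarrow> vec \<Rightarrow> vec" where "Fmap k = lin (Fbas k)"

text \<open>With base weight mu + m:
  Fchain n m = F_{mu+m,n-1} o ... o F_{mu+m+n-2,1} o F_{mu+m+n-1} (F_{mu+m+n-1} applied first),
  Echain n m = E_{mu+m+n-1} o ... o E_{mu+m+1,n-2} o E_{mu+m,n-1} (E_{mu+m,n-1} applied first).\<close>
definition Fchain :: "nat \<Rightarrow> int \<Rightarrow> vec \<Rightarrow> vec" where
  "Fchain n m v = foldl (\<lambda>w k. Fmap (m + int k) w) v (rev [0..<n])"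

definition Echain :: "nat \<Rightarrow> int \<Rightarrow> vec \<Rightarrow> vec" where
  "Echain n m v = foldl (\<lambda>w k. Emap (m + int k) w) v [0..<n]"

text \<open>Elements of M(lambda) (no V_1 tensor factors), finitely supported.\<close>
definition inM :: "vec \<Rightarrow> bool" where
  "inM v \<longleftrightarrow> finite {b. v b \<noteq> 0} \<and> (\<forall>b. v b \<noteq> 0 \<longrightarrow> snd b = [])"

end

theory Submission
  imports Defs
begin

definition supp :: "vec \<Rightarrow> basis set" where "supp v = {b. v b \<noteq> 0}"

lemma lin_superset:
  assumes "finite S" "supp v \<subseteq> S"
  shows "lin f v c = (\<Sum>b\<in>S. v b * f b c)"
  unfolding lin_def using assms
  by (intro sum.mono_neutral_left) (auto simp: supp_def)

lemma Fbas_supp: "supp (Fbas k (i, rest)) \<subseteq> {(i, False # rest), (i - 1, True # rest)}"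
  by (auto simp: supp_def Fbas_def delta_def split: if_splits)

lemma Fbas_fin: "finite (supp (Fbas k b))"
proof (cases b)
  case (Pair i rest)
  show ?thesis unfolding Pair by (rule finite_subset[OF Fbas_supp]) simp
qed

lemma lin_scale: "lin f (\<lambda>b. a * w b) = (\<lambda>c. a * lin f w c)"
proof (cases "a = 0")
  case True thus ?thesis by (simp add: lin_def)
next
  case False thus ?thesis by (simp add: lin_def sum_distrib_left mult.assoc)
qed

lemma lin_finite:
  assumes "finite (supp v)" "\<And>b. finite (supp (f b))"
  shows "finite (supp (lin f v))"
proof -
  have "supp (lin f v) \<subseteq> (\<Union>b\<in>supp v. supp (f b))"
  proof
    fix c assume "c \<in> supp (lin f v)"
    hence ne: "(\<Sum>b\<in>supp v. v b * f b c) \<noteq> 0" unfolding supp_def lin_def by simp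
    have "\<exists>b\<in>supp v. v b * f b c \<noteq> 0"
    proof (rule ccontr)
      assume "\<not> ?thesis"
      hence "(\<Sum>b\<in>supp v. v b * f b c) = 0" by (intro sum.neutral) blast
      with ne show False by contradiction
    qed
    then obtain b where b: "b \<in> supp v" "v b * f b c \<noteq> 0" by blast
    hence "c \<in> supp (f b)" unfolding supp_def by simp
    with b(1) show "c \<in> (\<Union>b\<in>supp v. supp (f b))" by (rule UN_I)
  qed
  moreover have "finite (\<Union>b\<in>supp v. supp (f b))" using assms by blast
  ultimately show ?thesis by (rule finite_subset)
qed

lemma qq_nz: "qq \<noteq> 0"
  by (simp add: qq_def Zero_fract_def eq_fract)
lemma qmu_nz: "qmu \<noteq> 0"
  by (simp add: qmu_def Zero_fract_def eq_fract)
lemma D_nz: "qq - inverse qq \<noteq> 0"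
proof
  assume "qq - inverse qq = 0"
  hence "qq * qq = 1" using qq_nz by (simp add: field_simps)
  hence "[:[:0, 1:]:] * [:[:0, 1:]:] = (1 :: complex poly poly)"
    by (simp add: qq_def One_fract_def eq_fract)
  hence "coeff (coeff ([:[:0, 1:]:] * [:[:0, 1:]:]) 0) 0 = coeff (coeff (1 :: complex poly poly) 0) (0::nat)" by simp
  thus False by simp
qed
lemma abs_id:
  fixes u t y D :: "'a::field"
  assumes "u \<noteq> 0" "t \<noteq> 0" "y \<noteq> 0" "D \<noteq> 0"
  shows "((u*(t/y) - inverse(u*(t/y)))/D)*y + (y/t)*inverse u*((y - inverse y)/D) = (u*t - inverse(u*t))/D"
  using assms by (simp add: field_simps)
lemma key_identity:
  "qmuint (k + 1 - int i) * qq ^ i + qq powi (int i - k - 1) * inverse qmu * qint (int i) = qmuint (k + 1)"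
proof -
  have nz: "qq powi (k+1) \<noteq> 0" "qq ^ i \<noteq> 0" using qq_nz by auto
  have e1: "qq powi (k + 1 - int i) = qq powi (k+1) / qq ^ i"
    using power_int_diff[of qq "k+1" "int i"] qq_nz by simp
  have e2: "qq powi (int i - k - 1) = qq ^ i / qq powi (k+1)"
    using power_int_diff[of qq "int i" "k+1"] qq_nz by (simp add: algebra_simps)
  have e3: "qint (int i) = (qq ^ i - inverse (qq ^ i)) / (qq - inverse qq)"
    unfolding qint_def by (simp add: power_int_minus)
  show ?thesis
    unfolding e2 e3 qmuint_def e1
    using abs_id[OF qmu_nz nz(1) nz(2) D_nz] by simp
qed

lemma EF_bas: "lin Ebas (Fbas k (i, rest)) = (\<lambda>c. qmuint (k + 1) * delta (i, rest) c)"
proof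
  fix c
  define A where "A = qmuint (k + 1 - int i)"
  define B where "B = (if i = 0 then 0 else qq powi (int i - k - 1) * inverse qmu * qint (int i))"
  have key: "A * qq ^ i + B = qmuint (k + 1)"
  proof (cases "i = 0")
    case True thus ?thesis by (simp add: A_def B_def)
  next
    case False
    hence "B = qq powi (int i - k - 1) * inverse qmu * qint (int i)" by (simp add: B_def)
    thus ?thesis unfolding A_def by (simp only: key_identity)
  qed
  have fa: "Fbas k (i, rest) (i, False # rest) = A"
    by (simp add: Fbas_def delta_def A_def)
  have fb: "Fbas k (i, rest) (i - 1, True # rest) = B"
    by (simp add: Fbas_def delta_def B_def)
  have ea: "Ebas (i, False # rest) c = qq ^ i * delta (i, rest) c" by simp
  have eb: "B * Ebas (i - 1, True # rest) c = B * delta (i, rest) c"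
    by (cases "i = 0") (simp_all add: B_def)
  have "lin Ebas (Fbas k (i, rest)) c = (\<Sum>b\<in>{(i, False # rest), (i - 1, True # rest)}. Fbas k (i, rest) b * Ebas b c)"
    by (rule lin_superset[OF _ Fbas_supp]) simp
  also have "\<dots> = Fbas k (i, rest) (i, False # rest) * Ebas (i, False # rest) c
      + Fbas k (i, rest) (i - 1, True # rest) * Ebas (i - 1, True # rest) c"
    by simp
  also have "\<dots> = A * (qq ^ i * delta (i, rest) c) + B * delta (i, rest) c"
    by (simp only: fa fb ea eb)
  also have "\<dots> = (A * qq ^ i + B) * delta (i, rest) c"
    by (simp only: distrib_right mult.assoc)
  also have "\<dots> = qmuint (k + 1) * delta (i, rest) c"
    by (simp only: key)
  finally show "lin Ebas (Fbas k (i, rest)) c = qmuint (k + 1) * delta (i, rest) c" .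
qed

lemma EF:
  assumes "finite (supp w)"
  shows "Emap k (Fmap k w) = (\<lambda>c. qmuint (k + 1) * w c)"
proof
  fix c
  define S where "S = supp w"
  define S' where "S' = (\<Union>b\<in>S. {(fst b, False # snd b), (fst b - 1, True # snd b)})"
  have fS: "finite S" "finite S'" using assms by (auto simp: S_def S'_def)
  have sub: "supp (Fbas k b) \<subseteq> S'" if "b \<in> S" for b
  proof -
    have "supp (Fbas k b) \<subseteq> {(fst b, False # snd b), (fst b - 1, True # snd b)}"
      using Fbas_supp[of k "fst b" "snd b"] by simp
    also have "\<dots> \<subseteq> S'" unfolding S'_def using that by (rule UN_upper)
    finally show ?thesis .
  qed
  have Fw: "Fmap k w b' = (\<Sum>b\<in>S. w b * Fbas k b b')" for b'
    unfolding Fmap_def S_def by (rule lin_superset[OF assms subset_refl])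
  have sub2: "supp (Fmap k w) \<subseteq> S'"
  proof
    fix c assume "c \<in> supp (Fmap k w)"
    hence "(\<Sum>b\<in>S. w b * Fbas k b c) \<noteq> 0" unfolding supp_def Fw by simp
    have "\<exists>b\<in>S. w b * Fbas k b c \<noteq> 0"
    proof (rule ccontr)
      assume "\<not> ?thesis"
      hence "(\<Sum>b\<in>S. w b * Fbas k b c) = 0" by (intro sum.neutral) blast
      with \<open>(\<Sum>b\<in>S. w b * Fbas k b c) \<noteq> 0\<close> show False by contradiction
    qed
    then obtain b where b: "b \<in> S" "w b * Fbas k b c \<noteq> 0" by blast
    hence "c \<in> supp (Fbas k b)" unfolding supp_def by simp
    thus "c \<in> S'" using sub[OF b(1)] by (rule subsetD[rotated])
  qed
  have "Emap k (Fmap k w) c = (\<Sum>b'\<in>S'. Fmap k w b' * Ebas b' c)"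
    unfolding Emap_def by (rule lin_superset[OF fS(2) sub2])
  also have "\<dots> = (\<Sum>b'\<in>S'. (\<Sum>b\<in>S. w b * Fbas k b b') * Ebas b' c)"
    by (simp only: Fw)
  also have "\<dots> = (\<Sum>b'\<in>S'. \<Sum>b\<in>S. w b * (Fbas k b b' * Ebas b' c))"
    by (simp only: sum_distrib_right mult.assoc)
  also have "\<dots> = (\<Sum>b\<in>S. \<Sum>b'\<in>S'. w b * (Fbas k b b' * Ebas b' c))"
    by (rule sum.swap)
  also have "\<dots> = (\<Sum>b\<in>S. w b * (\<Sum>b'\<in>S'. Fbas k b b' * Ebas b' c))"
    by (simp only: sum_distrib_left)
  also have "\<dots> = (\<Sum>b\<in>S. w b * lin Ebas (Fbas k b) c)"
  proof (rule sum.cong[OF refl])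
    fix b assume "b \<in> S"
    show "w b * (\<Sum>b'\<in>S'. Fbas k b b' * Ebas b' c) = w b * lin Ebas (Fbas k b) c"
      by (simp only: lin_superset[OF fS(2) sub[OF \<open>b \<in> S\<close>]])
  qed
  also have "\<dots> = (\<Sum>b\<in>S. w b * (qmuint (k + 1) * delta b c))"
  proof (intro sum.cong refl)
    fix b show "w b * lin Ebas (Fbas k b) c = w b * (qmuint (k + 1) * delta b c)"
      using EF_bas[of k "fst b" "snd b"] by simp
  qed
  also have "\<dots> = qmuint (k + 1) * w c"
  proof (cases "c \<in> S")
    case True
    hence "(\<Sum>b\<in>S. w b * (qmuint (k + 1) * delta b c)) = (\<Sum>b\<in>{c}. w b * (qmuint (k + 1) * delta b c))"
      by (intro sum.mono_neutral_right fS) (auto simp: delta_def)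
    thus ?thesis by (simp add: delta_def)
  next
    case False
    hence "w c = 0" by (simp add: S_def supp_def)
    moreover have "(\<Sum>b\<in>S. w b * (qmuint (k + 1) * delta b c)) = 0"
      using False by (intro sum.neutral) (auto simp: delta_def)
    ultimately show ?thesis by simp
  qed
  finally show "Emap k (Fmap k w) c = qmuint (k + 1) * w c" .
qed

lemma Fchain_Suc: "Fchain (Suc n) m v = Fchain n m (Fmap (m + int n) v)"
  by (simp add: Fchain_def)

lemma Echain_Suc: "Echain (Suc n) m v = Emap (m + int n) (Echain n m v)"
  by (simp add: Echain_def)

lemma Fmap_fin: "finite (supp w) \<Longrightarrow> finite (supp (Fmap k w))"
  unfolding Fmap_def by (rule lin_finite) (auto intro: Fbas_fin)

lemma gen:
  "finite (supp w) \<Longrightarrow> Echain n m (Fchain n m w) = (\<lambda>b. (\<Prod>k\<in>{1..n}. qmuint (m + int k)) * w b)"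
proof (induction n arbitrary: w)
  case 0 thus ?case by (simp add: Echain_def Fchain_def)
next
  case (Suc n)
  have "Echain (Suc n) m (Fchain (Suc n) m w)
      = Emap (m + int n) (\<lambda>b. (\<Prod>k\<in>{1..n}. qmuint (m + int k)) * Fmap (m + int n) w b)"
    by (simp add: Echain_Suc Fchain_Suc Suc.IH Fmap_fin Suc.prems)
  also have "\<dots> = (\<lambda>c. (\<Prod>k\<in>{1..n}. qmuint (m + int k)) * (qmuint (m + int n + 1) * w c))"
  proof -
    have "Emap (m + int n) (Fmap (m + int n) w) = (\<lambda>c. qmuint (m + int n + 1) * w c)"
      by (rule EF[OF Suc.prems])
    hence "lin Ebas (Fmap (m + int n) w) c = qmuint (m + int n + 1) * w c" for c
      unfolding Emap_def by (rule fun_cong)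
    thus ?thesis unfolding Emap_def lin_scale by simp
  qed
  also have "\<dots> = (\<lambda>b. (\<Prod>k\<in>{1..Suc n}. qmuint (m + int k)) * w b)"
  proof -
    have p: "(\<Prod>k\<in>{1..Suc n}. qmuint (m + int k)) = qmuint (m + int (Suc n)) * (\<Prod>k\<in>{1..n}. qmuint (m + int k))"
      by (simp add: atLeastAtMostSuc_conv)
    have e: "m + int n + 1 = m + int (Suc n)" by simp
    show ?thesis unfolding p e by (simp only: mult.assoc mult.left_commute)
  qed
  finally show ?case .
qed

theorem mainTheorem4:
  fixes n :: nat and m :: int and v :: vec
  assumes "n \<ge> 1" and "inM v"
  shows "Echain n m (Fchain n m v) = (\<lambda>b. (\<Prod>k\<in>{1..n}. qmuint (m + int k)) * v b)"
  using assms(2) by (intro gen) (simp add: inM_def supp_def)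

end
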